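(* Let $G=A*_C B$ be an amalgamated free product and let $P$ be a normal subsemigroup of $A$ with $P\cap C=\emptyset$. If $n\ge1$, $d_1,\dots,d_n\in P$ and $f_1,\dots,f_n\in G\setminus A$, then $d_1^{f_1}\cdots d_n^{f_n}\notin A$.
   Context: Notation $x^y=y^{-1}xy$. A normal subsemigroup of a group $H$ is a (possibly empty) subset closed under multiplication and under conjugation by elements of $H$. *)

theory Defs
  imports "HOL-Algebra.Algebra"
begin

definition mprod :: "('a, 'b) monoid_scheme \<Rightarrow> 'a list \<Rightarrow> 'a" where
  "mprod G xs = foldr (\<lambda>x y. x \<otimes>\<^bsub>G\<^esub> y) xs \<one>\<^bsub>G\<^esub>"

definition conjg :: "('a, 'b) monoid_scheme \<Rightarrow> 'a \<Rightarrow> 'a \<Rightarrow> 'a" where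
  "conjg G x y = inv\<^bsub>G\<^esub> y \<otimes>\<^bsub>G\<^esub> x \<otimes>\<^bsub>G\<^esub> y"

definition reduced_word :: "'a set \<Rightarrow> 'a set \<Rightarrow> 'a set \<Rightarrow> 'a list \<Rightarrow> bool" where
  "reduced_word A B C ws \<longleftrightarrow> ws \<noteq> [] \<and> set ws \<subseteq> (A - C) \<union> (B - C) \<and>
     (\<forall>i. Suc i < length ws \<longrightarrow> (ws ! i \<in> A \<longleftrightarrow> ws ! Suc i \<notin> A))"

text \<open>G is the (internal) amalgamated free product A *_C B: A, B subgroups of G with
  A \<inter> B = C, A \<union> B generates G, and no reduced word represents the identity
  (normal form theorem; equivalent to the universal property).\<close>
definition amalgamated_free_product ::
  "('a, 'b) monoid_scheme \<Rightarrow> 'a set \<Rightarrow> 'a set \<Rightarrow> 'a set \<Rightarrow> bool" where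
  "amalgamated_free_product G A B C \<longleftrightarrow>
     group G \<and> subgroup A G \<and> subgroup B G \<and> A \<inter> B = C \<and>
     generate G (A \<union> B) = carrier G \<and>
     (\<forall>ws. reduced_word A B C ws \<longrightarrow> mprod G ws \<noteq> \<one>\<^bsub>G\<^esub>)"

definition normal_subsemigroup :: "('a, 'b) monoid_scheme \<Rightarrow> 'a set \<Rightarrow> 'a set \<Rightarrow> bool" where
  "normal_subsemigroup G P A \<longleftrightarrow> P \<subseteq> A \<and>
     (\<forall>x\<in>P. \<forall>y\<in>P. x \<otimes>\<^bsub>G\<^esub> y \<in> P) \<and>
     (\<forall>x\<in>P. \<forall>h\<in>A. conjg G x h \<in> P)"

end

theory Submission
  imports Defs
begin

locale amal = group G for G (structure) +
  fixes A B C P :: "'a set"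
  assumes subA: "subgroup A G" and subB: "subgroup B G" and AB: "A \<inter> B = C"
  and nf: "\<forall>ws. reduced_word A B C ws \<longrightarrow> mprod G ws \<noteq> \<one>"
  and PA: "P \<subseteq> A" and Pmul: "\<forall>x\<in>P. \<forall>y\<in>P. x \<otimes> y \<in> P"
  and Pconj: "\<forall>x\<in>P. \<forall>h\<in>A. inv h \<otimes> x \<otimes> h \<in> P"
  and PCd: "P \<inter> C = {}"
begin

lemma inv_cancel_l[simp]: "x \<in> carrier G \<Longrightarrow> y \<in> carrier G \<Longrightarrow> inv x \<otimes> (x \<otimes> y) = y"
  by (simp add: m_assoc[symmetric])
lemma inv_cancel_r[simp]: "x \<in> carrier G \<Longrightarrow> y \<in> carrier G \<Longrightarrow> x \<otimes> (inv x \<otimes> y) = y"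
  by (simp add: m_assoc[symmetric])

lemma subC: "subgroup C G"
  using subgroups_Inter_pair[OF subA subB] AB by simp

lemma A_car: "x \<in> A \<Longrightarrow> x \<in> carrier G" using subA subgroup.subset by blast
lemma B_car: "x \<in> B \<Longrightarrow> x \<in> carrier G" using subB subgroup.subset by blast
lemma C_car: "x \<in> C \<Longrightarrow> x \<in> carrier G" using subC subgroup.subset by blast
lemma CA: "x \<in> C \<Longrightarrow> x \<in> A" using AB by blast
lemma CB: "x \<in> C \<Longrightarrow> x \<in> B" using AB by blast
lemma P_car: "x \<in> P \<Longrightarrow> x \<in> carrier G" using PA A_car by blast

lemma A_mult: "x \<in> A \<Longrightarrow> y \<in> A \<Longrightarrow> x \<otimes> y \<in> A" by (rule subgroup.m_closed[OF subA])
lemma B_mult: "x \<in> B \<Longrightarrow> y \<in> B \<Longrightarrow> x \<otimes> y \<in> B" by (rule subgroup.m_closed[OF subB])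
lemma C_mult: "x \<in> C \<Longrightarrow> y \<in> C \<Longrightarrow> x \<otimes> y \<in> C" by (rule subgroup.m_closed[OF subC])
lemma A_inv: "x \<in> A \<Longrightarrow> inv x \<in> A" by (rule subgroup.m_inv_closed[OF subA])
lemma B_inv: "x \<in> B \<Longrightarrow> inv x \<in> B" by (rule subgroup.m_inv_closed[OF subB])
lemma C_inv: "x \<in> C \<Longrightarrow> inv x \<in> C" by (rule subgroup.m_inv_closed[OF subC])
lemma C_one: "\<one> \<in> C" by (rule subgroup.one_closed[OF subC])

lemma A_inv_iff: "x \<in> carrier G \<Longrightarrow> inv x \<in> A \<longleftrightarrow> x \<in> A"
  using A_inv inv_inv by fastforce
lemma C_inv_iff: "x \<in> carrier G \<Longrightarrow> inv x \<in> C \<longleftrightarrow> x \<in> C"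
  using C_inv inv_inv by fastforce
lemma B_inv_iff: "x \<in> carrier G \<Longrightarrow> inv x \<in> B \<longleftrightarrow> x \<in> B"
  using B_inv inv_inv by fastforce

definition PC where "PC = {p \<otimes> c | p c. p \<in> P \<and> c \<in> C}"

lemma PC_A: "x \<in> PC \<Longrightarrow> x \<in> A"
  unfolding PC_def using PA CA A_mult by blast
lemma PC_car: "x \<in> PC \<Longrightarrow> x \<in> carrier G" using PC_A A_car by blast

lemma PC_mult_C: assumes "x \<in> PC" "c \<in> C" shows "x \<otimes> c \<in> PC"
proof -
  obtain p c0 where x: "x = p \<otimes> c0" "p \<in> P" "c0 \<in> C" using assms unfolding PC_def by blast
  have "x \<otimes> c = p \<otimes> (c0 \<otimes> c)" using x assms P_car C_car m_assoc by simp
  thus ?thesis using x assms C_mult unfolding PC_def by blast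
qed

lemma C_mult_P: assumes "c \<in> C" "p \<in> P" shows "c \<otimes> p \<otimes> inv c \<in> P"
proof -
  have "inv (inv c) \<otimes> p \<otimes> inv c \<in> P" using Pconj assms CA A_inv by blast
  thus ?thesis using assms C_car by simp
qed

lemma C_mult_PC: assumes "c \<in> C" "x \<in> PC" shows "c \<otimes> x \<in> PC"
proof -
  obtain p c0 where x: "x = p \<otimes> c0" "p \<in> P" "c0 \<in> C" using assms unfolding PC_def by blast
  have cc: "c \<in> carrier G" "c0 \<in> carrier G" "p \<in> carrier G" using x assms C_car P_car by auto
  have "c \<otimes> x = (c \<otimes> p \<otimes> inv c) \<otimes> (c \<otimes> c0)"
    using cc x by (simp add: m_assoc)
  thus ?thesis using x assms C_mult_P C_mult unfolding PC_def by blast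
qed

lemma PC_mult: assumes "x \<in> PC" "y \<in> PC" shows "x \<otimes> y \<in> PC"
proof -
  obtain p c0 where x: "x = p \<otimes> c0" "p \<in> P" "c0 \<in> C" using assms unfolding PC_def by blast
  have "c0 \<otimes> y \<in> PC" using C_mult_PC x assms by blast
  then obtain q c1 where y: "c0 \<otimes> y = q \<otimes> c1" "q \<in> P" "c1 \<in> C" unfolding PC_def by blast
  have "x \<otimes> y = (p \<otimes> q) \<otimes> c1"
    using x y assms P_car C_car PC_car by (simp add: m_assoc)
  thus ?thesis using x y Pmul unfolding PC_def by blast
qed

lemma one_notin_PC: "\<one> \<notin> PC"
proof
  assume "\<one> \<in> PC"
  then obtain p c where x: "\<one> = p \<otimes> c" "p \<in> P" "c \<in> C" unfolding PC_def by blast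
  hence "p = inv c" using P_car C_car by (metis inv_equality)
  hence "p \<in> C" using C_inv x by simp
  thus False using PCd x by blast
qed

lemma PC_not_both: "x \<in> PC \<Longrightarrow> inv x \<in> PC \<Longrightarrow> False"
  using PC_mult[of x "inv x"] PC_car one_notin_PC by simp

lemma PC_C_iff: assumes "x \<in> carrier G" "c \<in> C" shows "x \<otimes> c \<in> PC \<longleftrightarrow> x \<in> PC"
proof
  assume "x \<otimes> c \<in> PC"
  hence "x \<otimes> c \<otimes> inv c \<in> PC" using PC_mult_C C_inv assms by blast
  thus "x \<in> PC" using assms C_car by (simp add: m_assoc)
qed (use PC_mult_C assms in blast)

lemma C_PC_iff: assumes "x \<in> carrier G" "c \<in> C" shows "c \<otimes> x \<in> PC \<longleftrightarrow> x \<in> PC"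
proof
  assume "c \<otimes> x \<in> PC"
  hence "inv c \<otimes> (c \<otimes> x) \<in> PC" using C_mult_PC C_inv assms by blast
  thus "x \<in> PC" using assms C_car by (simp add: m_assoc[symmetric])
qed (use C_mult_PC assms in blast)

definition sg :: "'a \<Rightarrow> int" where
  "sg x = (if x \<in> PC then 1 else if inv x \<in> PC then -1 else 0)"

lemma sg_le: "sg x \<le> 1" and sg_ge: "-1 \<le> sg x" unfolding sg_def by auto

lemma sg_inv: assumes "x \<in> carrier G" shows "sg (inv x) = - sg x"
  using PC_not_both[of x] PC_not_both[of "inv x"] assms unfolding sg_def by auto

lemma sg_mult_C: assumes "x \<in> carrier G" "c \<in> C" shows "sg (x \<otimes> c) = sg x"
proof -
  have "inv (x \<otimes> c) = inv c \<otimes> inv x" using assms C_car inv_mult_group by auto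
  thus ?thesis unfolding sg_def using PC_C_iff C_PC_iff assms C_inv by auto
qed

lemma sg_C_mult: assumes "x \<in> carrier G" "c \<in> C" shows "sg (c \<otimes> x) = sg x"
proof -
  have "inv (c \<otimes> x) = inv x \<otimes> inv c" using assms C_car inv_mult_group by auto
  thus ?thesis unfolding sg_def using PC_C_iff C_PC_iff assms C_inv by auto
qed

lemma sg_notA: assumes "x \<in> carrier G" "x \<notin> A" shows "sg x = 0"
  using assms PC_A A_inv_iff unfolding sg_def by auto

lemma C_notin_PC: assumes "c \<in> C" shows "c \<notin> PC"
proof
  assume "c \<in> PC"
  hence "inv c \<otimes> c \<in> PC" using C_mult_PC C_inv assms by blast
  thus False using one_notin_PC assms C_car by simp
qed

lemma sg_C: assumes "c \<in> C" shows "sg c = 0"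
  using C_notin_PC[OF assms] C_notin_PC[OF C_inv[OF assms]] unfolding sg_def by simp

lemma sg_super: assumes x: "x \<in> carrier G" and y: "y \<in> carrier G"
  shows "sg x + sg y - 1 \<le> sg (x \<otimes> y)"
proof -
  have e1: "inv (x \<otimes> y) \<otimes> x = inv y" using x y by (simp add: inv_mult_group m_assoc)
  have e2: "y \<otimes> inv (x \<otimes> y) = inv x" using x y by (simp add: inv_mult_group m_assoc[symmetric])
  have i1: "inv (x \<otimes> y) \<in> PC \<Longrightarrow> x \<in> PC \<Longrightarrow> inv y \<in> PC" using PC_mult e1 by metis
  have i2: "inv (x \<otimes> y) \<in> PC \<Longrightarrow> y \<in> PC \<Longrightarrow> inv x \<in> PC" using PC_mult e2 by metis
  have i3: "x \<in> PC \<Longrightarrow> y \<in> PC \<Longrightarrow> x \<otimes> y \<in> PC" using PC_mult by blast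
  show ?thesis using i1 i2 i3 PC_not_both[of x] PC_not_both[of y] PC_not_both[of "x \<otimes> y"]
    unfolding sg_def by auto
qed


lemma mprod_Nil[simp]: "mprod G [] = \<one>" unfolding mprod_def by simp
lemma mprod_Cons[simp]: "mprod G (x # xs) = x \<otimes> mprod G xs" unfolding mprod_def by simp
lemma mprod_car: "set xs \<subseteq> carrier G \<Longrightarrow> mprod G xs \<in> carrier G"
  by (induction xs) auto
lemma mprod_append: "set xs \<subseteq> carrier G \<Longrightarrow> set ys \<subseteq> carrier G \<Longrightarrow>
  mprod G (xs @ ys) = mprod G xs \<otimes> mprod G ys"
  by (induction xs) (auto simp: mprod_car m_assoc)
lemma mprod_single[simp]: "x \<in> carrier G \<Longrightarrow> mprod G [x] = x" by simp
lemma mprod_inv: "set xs \<subseteq> carrier G \<Longrightarrow> inv (mprod G xs) = mprod G (rev (map (\<lambda>x. inv x) xs))"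
proof (induction xs)
  case (Cons x xs)
  have c: "x \<in> carrier G" "set xs \<subseteq> carrier G" using Cons.prems by auto
  have c2: "set (rev (map (\<lambda>x. inv x) xs)) \<subseteq> carrier G" using c by auto
  have "inv (mprod G (x # xs)) = inv (mprod G xs) \<otimes> inv x" using c mprod_car by (simp add: inv_mult_group)
  also have "\<dots> = mprod G (rev (map (\<lambda>x. inv x) xs)) \<otimes> mprod G [inv x]" using Cons.IH c by simp
  also have "\<dots> = mprod G (rev (map (\<lambda>x. inv x) (x # xs)))" using c c2 mprod_append[of "rev (map (\<lambda>x. inv x) xs)" "[inv x]"] by simp
  finally show ?case .
qed simp

definition S :: "'a list \<Rightarrow> int" where "S l = sum_list (map sg l)"
definition V :: "'a list \<Rightarrow> int" where "V l = S (butlast (tl l))"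

lemma S_Nil[simp]: "S [] = 0" and S_Cons[simp]: "S (x # l) = sg x + S l"
  and S_append[simp]: "S (l1 @ l2) = S l1 + S l2" unfolding S_def by auto
lemma S_rev[simp]: "S (rev l) = S l" by (induction l) auto
lemma S_inv: "set l \<subseteq> carrier G \<Longrightarrow> S (map (\<lambda>x. inv x) l) = - S l"
  by (induction l) (auto simp: sg_inv)

lemma V_Nil[simp]: "V [] = 0" unfolding V_def by simp
lemma V_Cons: "V (x # l) = S (butlast l)" unfolding V_def by simp
lemma V_snoc: "V (l @ [x]) = S (tl l)" unfolding V_def by (cases l) auto
lemma V_app: "l1 \<noteq> [] \<Longrightarrow> l2 \<noteq> [] \<Longrightarrow> V (l1 @ l2) = S (tl l1) + S (butlast l2)"
  unfolding V_def by (cases l1) (auto simp: butlast_append)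
lemma S_tl_snoc: "S (tl (l @ [x])) = (if l = [] then 0 else S (tl l) + sg x)"
  by (cases l) auto
lemma S_butlast_Cons: "S (butlast (x # l)) = (if l = [] then 0 else sg x + S (butlast l))"
  by (cases l) auto
lemma S_tl_le: "S (tl l) \<le> V l + 1"
proof (cases l rule: rev_cases)
  case (snoc ys y)
  then show ?thesis using S_tl_snoc[of ys y] V_snoc[of ys y] sg_le[of y] by auto
qed simp
lemma S_butlast_le: "S (butlast l) \<le> V l + 1"
proof (cases l)
  case (Cons y ys)
  then show ?thesis using S_butlast_Cons[of y ys] V_Cons[of y ys] sg_le[of y] by auto
qed simp

definition alt :: "'a \<Rightarrow> 'a \<Rightarrow> bool" where "alt x y \<longleftrightarrow> (x \<in> A) \<noteq> (y \<in> A)"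
definition red where "red ws \<longleftrightarrow> set ws \<subseteq> (A - C) \<union> (B - C) \<and> successively alt ws"

lemma red_car: "red ws \<Longrightarrow> set ws \<subseteq> carrier G" unfolding red_def using A_car B_car by blast

lemma succ_nth: "successively R xs \<longleftrightarrow> (\<forall>i. Suc i < length xs \<longrightarrow> R (xs ! i) (xs ! Suc i))"
proof (induction xs)
  case Nil
  then show ?case by simp
next
  case (Cons x xs)
  show ?case
  proof (cases xs)
    case Nil
    then show ?thesis by simp
  next
    case (Cons y ys)
    have e: "successively R (x # xs) \<longleftrightarrow> R x y \<and> successively R xs" using Cons by simp
    show ?thesis
    proof
      assume "successively R (x # xs)"
      hence h: "R x y" "\<forall>i. Suc i < length xs \<longrightarrow> R (xs ! i) (xs ! Suc i)" using e Cons.IH by auto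
      show "\<forall>i. Suc i < length (x # xs) \<longrightarrow> R ((x # xs) ! i) ((x # xs) ! Suc i)"
      proof (intro allI impI)
        fix i assume "Suc i < length (x # xs)"
        then show "R ((x # xs) ! i) ((x # xs) ! Suc i)"
          using h Cons by (cases i) auto
      qed
    next
      assume h: "\<forall>i. Suc i < length (x # xs) \<longrightarrow> R ((x # xs) ! i) ((x # xs) ! Suc i)"
      have "R x y" using h[rule_format, of 0] Cons by simp
      moreover have "\<forall>i. Suc i < length xs \<longrightarrow> R (xs ! i) (xs ! Suc i)"
      proof (intro allI impI)
        fix i assume "Suc i < length xs"
        then show "R (xs ! i) (xs ! Suc i)" using h[rule_format, of "Suc i"] by simp
      qed
      ultimately show "successively R (x # xs)" using e Cons.IH by blast
    qed
  qed
qed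

lemma red_reduced: "red ws \<Longrightarrow> ws \<noteq> [] \<Longrightarrow> reduced_word A B C ws"
  unfolding red_def reduced_word_def alt_def succ_nth by auto

lemma red_mprod_ne: "red ws \<Longrightarrow> ws \<noteq> [] \<Longrightarrow> mprod G ws \<noteq> \<one>"
  using nf red_reduced by blast



definition Lt where "Lt = (A - C) \<union> (B - C)"

lemma Lt_car: "x \<in> Lt \<Longrightarrow> x \<in> carrier G" unfolding Lt_def using A_car B_car by blast
lemma Lt_notA: "x \<in> Lt \<Longrightarrow> x \<notin> A \<Longrightarrow> x \<in> B - C" unfolding Lt_def by blast
lemma Lt_notC: "x \<in> Lt \<Longrightarrow> x \<notin> C" unfolding Lt_def by blast
lemma Lt_A: "x \<in> A \<Longrightarrow> x \<notin> C \<Longrightarrow> x \<in> Lt" unfolding Lt_def by blast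
lemma Lt_B: "x \<in> B \<Longrightarrow> x \<notin> C \<Longrightarrow> x \<in> Lt" unfolding Lt_def by blast
lemma BC_notA: "x \<in> B \<Longrightarrow> x \<notin> C \<Longrightarrow> x \<notin> A" using AB by blast

lemma Lt_mult_C: assumes "x \<in> Lt" "c \<in> C" shows "x \<otimes> c \<in> Lt" "(x \<otimes> c \<in> A) = (x \<in> A)"
proof -
  have xc: "x \<in> carrier G" "c \<in> carrier G" using assms Lt_car C_car by auto
  have nc: "x \<otimes> c \<notin> C"
  proof
    assume "x \<otimes> c \<in> C"
    hence "x \<otimes> c \<otimes> inv c \<in> C" using C_mult C_inv assms by blast
    thus False using xc assms Lt_notC by (simp add: m_assoc)
  qed
  show "x \<otimes> c \<in> Lt" "(x \<otimes> c \<in> A) = (x \<in> A)"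
  proof -
    { assume "x \<in> A"
      hence "x \<otimes> c \<in> A" using A_mult CA assms by blast
      hence "x \<otimes> c \<in> Lt \<and> (x \<otimes> c \<in> A) = (x \<in> A)" using nc Lt_A \<open>x \<in> A\<close> by blast }
    moreover
    { assume "x \<notin> A"
      hence "x \<in> B" using assms Lt_notA by blast
      hence "x \<otimes> c \<in> B" using B_mult CB assms by blast
      hence "x \<otimes> c \<in> Lt \<and> (x \<otimes> c \<in> A) = (x \<in> A)" using nc Lt_B \<open>x \<notin> A\<close> BC_notA by blast }
    ultimately show "x \<otimes> c \<in> Lt" "(x \<otimes> c \<in> A) = (x \<in> A)" by blast+
  qed
qed

lemma C_mult_Lt: assumes "x \<in> Lt" "c \<in> C" shows "c \<otimes> x \<in> Lt" "(c \<otimes> x \<in> A) = (x \<in> A)"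
proof -
  have xc: "x \<in> carrier G" "c \<in> carrier G" using assms Lt_car C_car by auto
  have nc: "c \<otimes> x \<notin> C"
  proof
    assume "c \<otimes> x \<in> C"
    hence "inv c \<otimes> (c \<otimes> x) \<in> C" using C_mult C_inv assms by blast
    thus False using xc assms Lt_notC by (simp add: m_assoc[symmetric])
  qed
  show "c \<otimes> x \<in> Lt" "(c \<otimes> x \<in> A) = (x \<in> A)"
  proof -
    { assume "x \<in> A"
      hence "c \<otimes> x \<in> A" using A_mult CA assms by blast
      hence "c \<otimes> x \<in> Lt \<and> (c \<otimes> x \<in> A) = (x \<in> A)" using nc Lt_A \<open>x \<in> A\<close> by blast }
    moreover
    { assume "x \<notin> A"
      hence "x \<in> B" using assms Lt_notA by blast
      hence "c \<otimes> x \<in> B" using B_mult CB assms by blast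
      hence "c \<otimes> x \<in> Lt \<and> (c \<otimes> x \<in> A) = (x \<in> A)" using nc Lt_B \<open>x \<notin> A\<close> BC_notA by blast }
    ultimately show "c \<otimes> x \<in> Lt" "(c \<otimes> x \<in> A) = (x \<in> A)" by blast+
  qed
qed

lemma merge_Lt: assumes "s \<in> Lt" "t \<in> Lt" "\<not> alt s t" "c \<in> C" "s \<otimes> c \<otimes> t \<notin> C"
  shows "s \<otimes> c \<otimes> t \<in> Lt" "(s \<otimes> c \<otimes> t \<in> A) = (s \<in> A)"
proof -
  have st: "(s \<in> A) = (t \<in> A)" using assms(3) unfolding alt_def by blast
  { assume "s \<in> A"
    hence "s \<otimes> c \<otimes> t \<in> A" using st A_mult CA assms by blast
    hence "s \<otimes> c \<otimes> t \<in> Lt \<and> (s \<otimes> c \<otimes> t \<in> A) = (s \<in> A)" using assms(5) Lt_A \<open>s \<in> A\<close> by blast }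
  moreover
  { assume "s \<notin> A"
    hence "s \<in> B" "t \<in> B" using st assms Lt_notA by blast+
    hence "s \<otimes> c \<otimes> t \<in> B" using B_mult CB assms by blast
    hence "s \<otimes> c \<otimes> t \<in> Lt \<and> (s \<otimes> c \<otimes> t \<in> A) = (s \<in> A)"
      using assms(5) Lt_B \<open>s \<notin> A\<close> BC_notA by blast }
  ultimately show "s \<otimes> c \<otimes> t \<in> Lt" "(s \<otimes> c \<otimes> t \<in> A) = (s \<in> A)" by blast+
qed

lemma red_alt: "red ws \<longleftrightarrow> set ws \<subseteq> Lt \<and> successively alt ws" unfolding red_def Lt_def by simp
lemma red_Nil[simp]: "red []" unfolding red_alt by simp
lemma red_single[simp]: "red [x] \<longleftrightarrow> x \<in> Lt" unfolding red_alt by simp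
lemma red_append: "red (l1 @ l2) \<longleftrightarrow> red l1 \<and> red l2 \<and> (l1 = [] \<or> l2 = [] \<or> alt (last l1) (hd l2))"
  unfolding red_alt successively_append_iff by auto
lemma red_Cons: "red (x # l) \<longleftrightarrow> x \<in> Lt \<and> red l \<and> (l = [] \<or> alt x (hd l))"
  using red_append[of "[x]" l] by simp
lemma red_snoc: "red (l @ [x]) \<longleftrightarrow> x \<in> Lt \<and> red l \<and> (l = [] \<or> alt (last l) x)"
  using red_append[of l "[x]"] by auto
lemma red_set: "red l \<Longrightarrow> x \<in> set l \<Longrightarrow> x \<in> Lt" unfolding red_alt by blast
lemma red_car': "red l \<Longrightarrow> set l \<subseteq> carrier G" using red_set Lt_car by blast

lemma S_tl_eq: assumes "red l" "l = [] \<or> last l \<notin> A" shows "S (tl l) = V l"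
proof (cases l rule: rev_cases)
  case (snoc ys y)
  have "y \<in> carrier G" using red_car'[OF assms(1)] snoc by auto
  hence "sg y = 0" using assms snoc sg_notA by auto
  then show ?thesis using snoc S_tl_snoc[of ys y] V_snoc[of ys y] by auto
qed simp

lemma S_butlast_eq: assumes "red l" "l = [] \<or> hd l \<notin> A" shows "S (butlast l) = V l"
proof (cases l)
  case (Cons y ys)
  have "y \<in> carrier G" using red_car'[OF assms(1)] Cons by auto
  hence "sg y = 0" using assms Cons sg_notA by auto
  then show ?thesis using Cons S_butlast_Cons[of y ys] V_Cons[of y ys] by auto
qed simp

lemma alt_sym: "alt x y = alt y x" unfolding alt_def by blast



lemma K:
  assumes "red xs" "red ys" "c \<in> C"
  shows "\<exists>zs c'. red zs \<and> c' \<in> C \<and> mprod G xs \<otimes> c \<otimes> mprod G ys = mprod G zs \<otimes> c'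
     \<and> V xs + V ys - 1 \<le> V zs \<and> (xs = [] \<longrightarrow> V ys \<le> V zs) \<and> (ys = [] \<longrightarrow> V xs \<le> V zs)"
  using assms
proof (induction "length xs + length ys" arbitrary: xs ys c rule: less_induct)
  case less
  have cc: "c \<in> carrier G" using less.prems C_car by blast
  show ?case
  proof (cases "xs = []")
    case True
    show ?thesis
    proof (cases ys)
      case Nil
      then show ?thesis using True less.prems cc
        by (intro exI[of _ "[]"] exI[of _ c]) auto
    next
      case (Cons y ys0)
      have y: "y \<in> Lt" "red ys0" "ys0 = [] \<or> alt y (hd ys0)" using less.prems Cons red_Cons by auto
      have cy: "c \<otimes> y \<in> Lt" "(c \<otimes> y \<in> A) = (y \<in> A)" using C_mult_Lt[OF y(1) less.prems(3)] by auto
      have r: "red ((c \<otimes> y) # ys0)" using y cy unfolding red_Cons alt_def by auto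
      have car: "y \<in> carrier G" "mprod G ys0 \<in> carrier G" using y Lt_car mprod_car red_car' by auto
      have p: "mprod G xs \<otimes> c \<otimes> mprod G ys = mprod G ((c \<otimes> y) # ys0) \<otimes> \<one>"
        using True Cons car cc by (simp add: m_assoc)
      have v: "V ((c \<otimes> y) # ys0) = V ys" using Cons by (simp add: V_Cons)
      show ?thesis using r p v True C_one by (intro exI[of _ "(c \<otimes> y) # ys0"] exI[of _ "\<one>"]) auto
    qed
  next
    case xsne: False
    show ?thesis
    proof (cases "ys = []")
      case True
      have car: "mprod G xs \<in> carrier G" using less.prems mprod_car red_car' by auto
      show ?thesis using True less.prems car cc xsne
        by (intro exI[of _ xs] exI[of _ c]) auto
    next
      case ysne: False
      obtain xs0 s where xs: "xs = xs0 @ [s]" using xsne rev_exhaust by blast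
      obtain t ys0 where ys: "ys = t # ys0" using ysne list.exhaust by blast
      have s: "s \<in> Lt" "red xs0" "xs0 = [] \<or> alt (last xs0) s" using less.prems xs red_snoc by auto
      have t: "t \<in> Lt" "red ys0" "ys0 = [] \<or> alt t (hd ys0)" using less.prems ys red_Cons by auto
      have car: "s \<in> carrier G" "t \<in> carrier G" "mprod G xs0 \<in> carrier G" "mprod G ys0 \<in> carrier G"
        "set xs0 \<subseteq> carrier G" "set ys0 \<subseteq> carrier G"
        using s t Lt_car mprod_car red_car' by auto
      have Vxs: "V xs = S (tl xs0)" using xs V_snoc by simp
      have Vys: "V ys = S (butlast ys0)" using ys V_Cons by simp
      have prod: "mprod G xs \<otimes> c \<otimes> mprod G ys = mprod G xs0 \<otimes> (s \<otimes> c \<otimes> t) \<otimes> mprod G ys0"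
        using xs ys car cc by (simp add: mprod_append m_assoc)
      consider (a) "alt s t" | (b) "\<not> alt s t" "s \<otimes> c \<otimes> t \<notin> C" | (c) "\<not> alt s t" "s \<otimes> c \<otimes> t \<in> C"
        by blast
      then show ?thesis
      proof cases
        case a
        have sc: "s \<otimes> c \<in> Lt" "(s \<otimes> c \<in> A) = (s \<in> A)" using Lt_mult_C[OF s(1) less.prems(3)] by auto
        define zs where "zs = (xs0 @ [s \<otimes> c]) @ (t # ys0)"
        have r1: "red (xs0 @ [s \<otimes> c])" using s sc unfolding red_snoc alt_def by auto
        have r: "red zs" unfolding zs_def using red_append[of "xs0 @ [s \<otimes> c]" "t # ys0"] r1 less.prems ys a sc unfolding alt_def by auto
        have scc: "s \<otimes> c \<in> carrier G" using sc Lt_car by blast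
        have p: "mprod G xs \<otimes> c \<otimes> mprod G ys = mprod G zs \<otimes> \<one>"
          unfolding prod zs_def using car cc scc by (simp add: mprod_append mprod_car m_assoc)
        have vz: "V zs = (if xs0 = [] then 0 else S (tl xs0) + sg (s \<otimes> c)) +
                         (if ys0 = [] then 0 else sg t + S (butlast ys0))"
          unfolding zs_def using V_app[of "xs0 @ [s \<otimes> c]" "t # ys0"] S_tl_snoc[of xs0 "s \<otimes> c"]
            S_butlast_Cons[of t ys0] by (simp del: append_assoc)
        have sgsc: "sg (s \<otimes> c) = sg s" using sg_mult_C car less.prems by blast
        have z: "sg s = 0 \<or> sg t = 0" using a sg_notA car unfolding alt_def by blast
        have "V xs + V ys - 1 \<le> V zs"
          unfolding vz Vxs Vys sgsc using z sg_ge[of s] sg_ge[of t] by auto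
        then show ?thesis using r p C_one xsne ysne by (intro exI[of _ zs] exI[of _ "\<one>"]) auto
      next
        case b
        define m where "m = s \<otimes> c \<otimes> t"
        have m: "m \<in> Lt" "(m \<in> A) = (s \<in> A)" using merge_Lt[OF s(1) t(1) b(1) less.prems(3)] b(2)
          unfolding m_def by auto
        have st: "(s \<in> A) = (t \<in> A)" using b(1) unfolding alt_def by blast
        define zs where "zs = (xs0 @ [m]) @ ys0"
        have r1: "red (xs0 @ [m])" using s m unfolding red_snoc alt_def by auto
        have r: "red zs" unfolding zs_def using red_append[of "xs0 @ [m]" ys0] r1 t m st unfolding alt_def by auto
        have mc: "m \<in> carrier G" using m Lt_car by blast
        have p: "mprod G xs \<otimes> c \<otimes> mprod G ys = mprod G zs \<otimes> \<one>"
          unfolding prod zs_def m_def[symmetric] using car cc mc by (simp add: mprod_append mprod_car m_assoc)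
        have "V xs + V ys - 1 \<le> V zs"
        proof (cases "ys0 = []")
          case True
          then show ?thesis unfolding zs_def Vxs Vys by (simp add: V_snoc)
        next
          case False
          have "V zs = (if xs0 = [] then 0 else S (tl xs0) + sg m) + S (butlast ys0)"
            unfolding zs_def using False V_app[of "xs0 @ [m]" ys0] S_tl_snoc[of xs0 m] by (simp del: append_assoc)
          then show ?thesis unfolding Vxs Vys using sg_ge[of m] by auto
        qed
        then show ?thesis using r p C_one xsne ysne by (intro exI[of _ zs] exI[of _ "\<one>"]) auto
      next
        case c
        define m where "m = s \<otimes> c \<otimes> t"
        have mC: "m \<in> C" using c m_def by simp
        have st: "(s \<in> A) = (t \<in> A)" using c(1) unfolding alt_def by blast
        have prod2: "mprod G xs \<otimes> c \<otimes> mprod G ys = mprod G xs0 \<otimes> m \<otimes> mprod G ys0"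
          using prod m_def by simp
        show ?thesis
        proof (cases "s \<in> A")
          case True
          have l1: "length xs0 + length ys0 < length xs + length ys" using xs ys by simp
          obtain zs c' where zs: "red zs" "c' \<in> C" "mprod G xs0 \<otimes> m \<otimes> mprod G ys0 = mprod G zs \<otimes> c'"
            "V xs0 + V ys0 - 1 \<le> V zs"
            using less.hyps[OF l1 s(2) t(2) mC] by blast
          have e1: "S (tl xs0) = V xs0" using S_tl_eq[OF s(2)] s(3) True unfolding alt_def by blast
          have e2: "S (butlast ys0) = V ys0" using S_butlast_eq[OF t(2)] t(3) True st unfolding alt_def by blast
          show ?thesis using zs prod2 Vxs Vys e1 e2 xsne ysne by (intro exI[of _ zs] exI[of _ c']) auto
        next
          case sA: False
          show ?thesis
          proof (cases "xs0 = [] \<or> ys0 = []")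
            case True
            have l1: "length xs0 + length ys0 < length xs + length ys" using xs ys by simp
            obtain zs c' where zs: "red zs" "c' \<in> C" "mprod G xs0 \<otimes> m \<otimes> mprod G ys0 = mprod G zs \<otimes> c'"
              "V xs0 + V ys0 - 1 \<le> V zs" "xs0 = [] \<longrightarrow> V ys0 \<le> V zs" "ys0 = [] \<longrightarrow> V xs0 \<le> V zs"
              using less.hyps[OF l1 s(2) t(2) mC] by blast
            have "V xs + V ys - 1 \<le> V zs"
              using True zs(5,6) Vxs Vys S_tl_le[of xs0] S_butlast_le[of ys0] by auto
            then show ?thesis using zs prod2 xsne ysne by (intro exI[of _ zs] exI[of _ c']) auto
          next
            case False
            obtain xs1 l where xs0: "xs0 = xs1 @ [l]" using False rev_exhaust by blast
            obtain y0 ys1 where ys0: "ys0 = y0 # ys1" using False list.exhaust by blast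
            have l: "l \<in> Lt" "red xs1" "xs1 = [] \<or> alt (last xs1) l" using s(2) xs0 red_snoc by auto
            have y0: "y0 \<in> Lt" "red ys1" "ys1 = [] \<or> alt y0 (hd ys1)" using t(2) ys0 red_Cons by auto
            have lA: "l \<in> A" using s(3) xs0 sA unfolding alt_def by auto
            have yA: "y0 \<in> A" using t(3) ys0 sA st unfolding alt_def by auto
            have car2: "l \<in> carrier G" "y0 \<in> carrier G" "mprod G xs1 \<in> carrier G" "mprod G ys1 \<in> carrier G"
              "set xs1 \<subseteq> carrier G" "set ys1 \<subseteq> carrier G" "m \<in> carrier G"
              using l y0 Lt_car mprod_car red_car' mC C_car by auto
            define m2 where "m2 = l \<otimes> m \<otimes> y0"
            have m2A: "m2 \<in> A" unfolding m2_def using lA yA mC CA A_mult by blast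
            have m2c: "m2 \<in> carrier G" using m2A A_car by blast
            have prod3: "mprod G xs \<otimes> c \<otimes> mprod G ys = mprod G xs1 \<otimes> m2 \<otimes> mprod G ys1"
              unfolding prod2 xs0 ys0 m2_def using car2 by (simp add: mprod_append m_assoc)
            have Vxs': "V xs = (if xs1 = [] then 0 else V xs1 + sg l)"
              using Vxs xs0 S_tl_snoc[of xs1 l] S_tl_eq[OF l(2)] l(3) lA unfolding alt_def by auto
            have Vys': "V ys = (if ys1 = [] then 0 else sg y0 + V ys1)"
              using Vys ys0 S_butlast_Cons[of y0 ys1] S_butlast_eq[OF y0(2)] y0(3) yA unfolding alt_def by auto
            show ?thesis
            proof (cases "m2 \<in> C")
              case False
              have m2L: "m2 \<in> Lt" using m2A False Lt_A by blast
              define zs where "zs = (xs1 @ [m2]) @ ys1"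
              have r1: "red (xs1 @ [m2])" using l m2L m2A lA unfolding red_snoc alt_def by auto
              have r: "red zs" unfolding zs_def using red_append[of "xs1 @ [m2]" ys1] r1 y0 m2A yA unfolding alt_def by auto
              have p: "mprod G xs \<otimes> c \<otimes> mprod G ys = mprod G zs \<otimes> \<one>"
                unfolding prod3 zs_def using car2 m2c by (simp add: mprod_append mprod_car m_assoc)
              have sgm2: "sg l + sg y0 - 1 \<le> sg m2"
              proof -
                have "m2 = l \<otimes> (m \<otimes> y0)" unfolding m2_def using car2 by (simp add: m_assoc)
                moreover have "sg (m \<otimes> y0) = sg y0" using sg_C_mult car2 mC by blast
                ultimately show ?thesis using sg_super[of l "m \<otimes> y0"] car2 by simp
              qed
              have e1: "S (tl xs1) = V xs1" using S_tl_eq[OF l(2)] l(3) lA unfolding alt_def by auto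
              have e2: "S (butlast ys1) = V ys1" using S_butlast_eq[OF y0(2)] y0(3) yA unfolding alt_def by auto
              have "V xs + V ys - 1 \<le> V zs"
              proof (cases "ys1 = []")
                case True
                have "V zs = S (tl xs1)" unfolding zs_def using True by (simp add: V_snoc)
                then show ?thesis using Vxs' Vys' True e1 sg_le[of l] by auto
              next
                case False
                have "V zs = (if xs1 = [] then 0 else S (tl xs1) + sg m2) + S (butlast ys1)"
                  unfolding zs_def using False V_app[of "xs1 @ [m2]" ys1] S_tl_snoc[of xs1 m2] by (simp del: append_assoc)
                then show ?thesis using Vxs' Vys' False e1 e2 sgm2 sg_le[of y0] by auto
              qed
              then show ?thesis using r p C_one xsne ysne by (intro exI[of _ zs] exI[of _ "\<one>"]) auto
            next
              case True
              have l1: "length xs1 + length ys1 < length xs + length ys" using xs ys xs0 ys0 by simp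
              obtain zs c' where zs: "red zs" "c' \<in> C" "mprod G xs1 \<otimes> m2 \<otimes> mprod G ys1 = mprod G zs \<otimes> c'"
                "V xs1 + V ys1 - 1 \<le> V zs" "xs1 = [] \<longrightarrow> V ys1 \<le> V zs" "ys1 = [] \<longrightarrow> V xs1 \<le> V zs"
                using less.hyps[OF l1 l(2) y0(2) True] by blast
              have sgy: "sg y0 = - sg l"
              proof -
                have "y0 = inv m \<otimes> (inv l \<otimes> m2)" unfolding m2_def using car2 by (simp add: m_assoc[symmetric])
                hence "sg y0 = sg (inv l \<otimes> m2)" using sg_C_mult[of "inv l \<otimes> m2" "inv m"] car2 m2c C_inv mC by simp
                also have "\<dots> = sg (inv l)" using sg_mult_C car2 True by simp
                finally show ?thesis using sg_inv car2 by simp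
              qed
              have "V xs + V ys - 1 \<le> V zs"
                using Vxs' Vys' zs(4,5,6) sgy sg_le[of l] sg_ge[of l] V_Nil by (cases "xs1 = []"; cases "ys1 = []") auto
              then show ?thesis using zs prod3 xsne ysne by (intro exI[of _ zs] exI[of _ c']) auto
            qed
          qed
        qed
      qed
    qed
  qed
qed



lemma nf_exists: "g \<in> generate G (A \<union> B) \<Longrightarrow> \<exists>zs c. red zs \<and> c \<in> C \<and> g = mprod G zs \<otimes> c"
proof (induction rule: generate.induct)
  case one
  then show ?case using C_one by (intro exI[of _ "[]"] exI[of _ "\<one>"]) auto
next
  case (incl h)
  have hc: "h \<in> carrier G" using incl A_car B_car by blast
  show ?case
  proof (cases "h \<in> C")
    case True
    then show ?thesis using hc by (intro exI[of _ "[]"] exI[of _ h]) auto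
  next
    case False
    hence "h \<in> Lt" using incl Lt_A Lt_B by blast
    then show ?thesis using hc C_one by (intro exI[of _ "[h]"] exI[of _ "\<one>"]) auto
  qed
next
  case (inv h)
  have hc: "h \<in> carrier G" using inv A_car B_car by blast
  have hAB: "inv h \<in> A \<union> B" using inv A_inv B_inv by blast
  show ?case
  proof (cases "inv h \<in> C")
    case True
    then show ?thesis using hc by (intro exI[of _ "[]"] exI[of _ "inv h"]) auto
  next
    case False
    hence "inv h \<in> Lt" using hAB Lt_A Lt_B by blast
    then show ?thesis using hc C_one by (intro exI[of _ "[inv h]"] exI[of _ "\<one>"]) auto
  qed
next
  case (eng h1 h2)
  obtain zs1 c1 where 1: "red zs1" "c1 \<in> C" "h1 = mprod G zs1 \<otimes> c1" using eng by blast
  obtain zs2 c2 where 2: "red zs2" "c2 \<in> C" "h2 = mprod G zs2 \<otimes> c2" using eng by blast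
  obtain zs c where z: "red zs" "c \<in> C" "mprod G zs1 \<otimes> c1 \<otimes> mprod G zs2 = mprod G zs \<otimes> c"
    using K[OF 1(1) 2(1) 1(2)] by blast
  have car: "mprod G zs1 \<in> carrier G" "mprod G zs2 \<in> carrier G" "mprod G zs \<in> carrier G"
    "c1 \<in> carrier G" "c2 \<in> carrier G" "c \<in> carrier G"
    using 1 2 z mprod_car red_car' C_car by auto
  have "h1 \<otimes> h2 = (mprod G zs1 \<otimes> c1 \<otimes> mprod G zs2) \<otimes> c2" using 1 2 car by (simp add: m_assoc)
  also have "\<dots> = mprod G zs \<otimes> (c \<otimes> c2)" using z car by (simp add: m_assoc)
  finally show ?case using z 2 C_mult by blast
qed

lemma absorb: assumes "red zs" "zs \<noteq> []" "c \<in> C"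
  shows "\<exists>zs'. red zs' \<and> zs' \<noteq> [] \<and> length zs' = length zs \<and> mprod G zs' = mprod G zs \<otimes> c"
proof -
  obtain zs0 z where zs: "zs = zs0 @ [z]" using assms rev_exhaust by blast
  have z: "z \<in> Lt" "red zs0" "zs0 = [] \<or> alt (last zs0) z" using assms zs red_snoc by auto
  have zc: "z \<otimes> c \<in> Lt" "(z \<otimes> c \<in> A) = (z \<in> A)" using Lt_mult_C[OF z(1) assms(3)] by auto
  have r: "red (zs0 @ [z \<otimes> c])" using z zc unfolding red_snoc alt_def by auto
  have car: "set zs0 \<subseteq> carrier G" "z \<in> carrier G" "c \<in> carrier G" "z \<otimes> c \<in> carrier G"
    using z zc red_car' Lt_car assms C_car by auto
  have "mprod G (zs0 @ [z \<otimes> c]) = mprod G zs \<otimes> c"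
    unfolding zs using car by (simp add: mprod_append mprod_car m_assoc)
  thus ?thesis using r zs by (intro exI[of _ "zs0 @ [z \<otimes> c]"]) auto
qed

lemma nonone: assumes "red zs" "zs \<noteq> []" "c \<in> C" shows "mprod G zs \<otimes> c \<noteq> \<one>"
  using absorb[OF assms] red_mprod_ne by metis

lemma notA: assumes "red zs" "1 \<le> V zs" "c \<in> C" shows "mprod G zs \<otimes> c \<notin> A"
proof
  assume h: "mprod G zs \<otimes> c \<in> A"
  have len: "2 \<le> length zs"
  proof (rule ccontr)
    assume "\<not> 2 \<le> length zs"
    hence "length (butlast (tl zs)) = 0" by simp
    hence "butlast (tl zs) = []" by blast
    thus False using assms(2) unfolding V_def by simp
  qed
  hence ne: "zs \<noteq> []" by auto
  define a where "a = mprod G zs \<otimes> c"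
  define e where "e = c \<otimes> inv a"
  have car: "set zs \<subseteq> carrier G" "mprod G zs \<in> carrier G" "c \<in> carrier G" "a \<in> carrier G"
    using assms red_car' mprod_car C_car h A_car a_def by auto
  have eA: "e \<in> A" unfolding e_def using assms(3) CA h a_def A_inv A_mult by blast
  have ec: "e \<in> carrier G" using eA A_car by blast
  have one: "mprod G zs \<otimes> e = \<one>" unfolding e_def a_def using car by (simp add: m_assoc[symmetric])
  obtain zs0 z where zs: "zs = zs0 @ [z]" using ne rev_exhaust by blast
  have z: "z \<in> Lt" "red zs0" "zs0 = [] \<or> alt (last zs0) z" using assms zs red_snoc by auto
  have car2: "z \<in> carrier G" "set zs0 \<subseteq> carrier G" "mprod G zs0 \<in> carrier G"
    using z Lt_car red_car' mprod_car by auto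
  have split: "mprod G zs \<otimes> e = mprod G zs0 \<otimes> (z \<otimes> e)"
    unfolding zs using car2 ec by (simp add: mprod_append m_assoc)
  show False
  proof (cases "e \<in> C")
    case True
    then show ?thesis using nonone[OF assms(1) ne True] one by simp
  next
    case eC: False
    show ?thesis
    proof (cases "z \<in> A")
      case False
      have r: "red (zs @ [e])" using assms(1) eA eC Lt_A False unfolding red_snoc alt_def zs by auto
      have "mprod G (zs @ [e]) \<otimes> \<one> = \<one>" using one car ec by (simp add: mprod_append)
      then show ?thesis using nonone[OF r _ C_one] by simp
    next
      case zA: True
      have zeA: "z \<otimes> e \<in> A" using zA eA A_mult by blast
      show ?thesis
      proof (cases "z \<otimes> e \<in> C")
        case True
        have "zs0 \<noteq> []" using len zs by auto
        then show ?thesis using nonone[OF z(2) _ True] one split by simp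
      next
        case False
        have r: "red (zs0 @ [z \<otimes> e])" using z zeA zA False Lt_A unfolding red_snoc alt_def by auto
        have "mprod G (zs0 @ [z \<otimes> e]) \<otimes> \<one> = \<one>" using one split car2 ec by (simp add: mprod_append)
        then show ?thesis using nonone[OF r _ C_one] by simp
      qed
    qed
  qed
qed

lemma outside_A: assumes "f \<in> carrier G" "f \<notin> A" "generate G (A \<union> B) = carrier G"
  shows "\<exists>a us. a \<in> A \<and> red us \<and> us \<noteq> [] \<and> hd us \<notin> A \<and> f = a \<otimes> mprod G us"
proof -
  obtain zs c where z: "red zs" "c \<in> C" "f = mprod G zs \<otimes> c" using nf_exists assms by blast
  have ne: "zs \<noteq> []" using z assms(2) C_car CA by auto
  obtain zs' where z': "red zs'" "zs' \<noteq> []" "mprod G zs' = f" using absorb[OF z(1) ne z(2)] z(3) by metis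
  obtain u us where u: "zs' = u # us" using z'(2) list.exhaust by blast
  have uu: "u \<in> Lt" "red us" "us = [] \<or> alt u (hd us)" using z'(1) u red_Cons by auto
  have car: "u \<in> carrier G" "mprod G us \<in> carrier G" using uu Lt_car mprod_car red_car' by auto
  show ?thesis
  proof (cases "u \<in> A")
    case True
    have "us \<noteq> []" using z'(3) u True car assms(2) by auto
    hence "hd us \<notin> A" using uu True unfolding alt_def by auto
    then show ?thesis using True uu \<open>us \<noteq> []\<close> z'(3) u by (intro exI[of _ u] exI[of _ us]) auto
  next
    case False
    then show ?thesis using z' u subA subgroup.one_closed car
      by (intro exI[of _ "\<one>"] exI[of _ zs']) auto
  qed
qed

lemma Lt_inv: "x \<in> Lt \<Longrightarrow> inv x \<in> Lt \<and> (inv x \<in> A \<longleftrightarrow> x \<in> A)"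
  unfolding Lt_def using A_inv_iff B_inv_iff C_inv_iff A_car B_car by blast

lemma tl_rev: "tl (rev l) = rev (butlast l)"
  using butlast_rev[of "rev l"] by simp
lemma tl_rev_map: "tl (rev (map f l)) = rev (map f (butlast l))"
  unfolding tl_rev map_butlast by (rule refl)

lemma conj_word: assumes "d \<in> P" "f \<in> carrier G" "f \<notin> A" "generate G (A \<union> B) = carrier G"
  shows "\<exists>ws. red ws \<and> V ws = 1 \<and> inv f \<otimes> d \<otimes> f = mprod G ws"
proof -
  obtain a us where au: "a \<in> A" "red us" "us \<noteq> []" "hd us \<notin> A" "f = a \<otimes> mprod G us"
    using outside_A assms(2,3,4) by blast
  define d' where "d' = inv a \<otimes> d \<otimes> a"
  have d'P: "d' \<in> P" unfolding d'_def using Pconj assms au by blast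
  have d'A: "d' \<in> A" using d'P PA by blast
  have d'C: "d' \<notin> C" using d'P PCd by blast
  have d'L: "d' \<in> Lt" using d'A d'C Lt_A by blast
  have car: "a \<in> carrier G" "d \<in> carrier G" "set us \<subseteq> carrier G" "mprod G us \<in> carrier G"
    "d' \<in> carrier G" using au assms A_car P_car red_car' mprod_car d'P by auto
  define us' where "us' = rev (map (\<lambda>x. inv x) us)"
  have car': "set us' \<subseteq> carrier G" unfolding us'_def using car by auto
  have ne': "us' \<noteq> []" unfolding us'_def using au by simp
  have sus: "set us \<subseteq> Lt" using au red_set by blast
  have r1: "red us'"
  proof -
    have "set us' \<subseteq> Lt" unfolding us'_def using sus Lt_inv by auto
    moreover have "successively alt us" using au red_alt by blast
    hence "successively (\<lambda>x y. alt (inv y) (inv x)) us"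
      by (rule successively_mono) (use sus Lt_inv in \<open>auto simp: alt_def\<close>)
    hence "successively alt us'" unfolding us'_def by (simp add: successively_map)
    ultimately show ?thesis using red_alt by blast
  qed
  have lastus': "last us' \<notin> A" unfolding us'_def using au car Lt_inv sus
    by (simp add: last_rev hd_map) (metis hd_in_set subsetD)
  define ws where "ws = (us' @ [d']) @ us"
  have r: "red ws" unfolding ws_def using red_append[of "us' @ [d']" us] red_snoc[of us' d'] r1 d'L au lastus' d'A ne'
    unfolding alt_def by auto
  have p: "inv f \<otimes> d \<otimes> f = mprod G ws"
  proof -
    have "inv f = inv (mprod G us) \<otimes> inv a" using au car by (simp add: inv_mult_group)
    hence "inv f \<otimes> d \<otimes> f = inv (mprod G us) \<otimes> d' \<otimes> mprod G us"
      unfolding d'_def using au car by (simp add: m_assoc)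
    also have "\<dots> = mprod G ws" unfolding ws_def us'_def using car car' mprod_inv[of us]
      by (simp add: mprod_append mprod_car m_assoc us'_def)
    finally show ?thesis .
  qed
  have sgd: "sg d' = 1"
  proof -
    have "d' = d' \<otimes> \<one>" using car by simp
    hence "d' \<in> PC" unfolding PC_def using d'P C_one by blast
    thus ?thesis unfolding sg_def by simp
  qed
  have v1: "V ws = S (tl us') + sg d' + S (butlast us)"
    unfolding ws_def using ne' au V_app[of "us' @ [d']" us] S_tl_snoc[of us' d'] by (simp del: append_assoc)
  have v2: "S (tl us') = - S (butlast us)"
  proof -
    have "tl us' = rev (map (\<lambda>x. inv x) (butlast us))"
      unfolding us'_def by (rule tl_rev_map)
    moreover have "set (butlast us) \<subseteq> carrier G" by (meson car(3) in_set_butlastD subset_iff)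
    ultimately show ?thesis using S_inv by simp
  qed
  have "V ws = 1" using v1 v2 sgd by simp
  thus ?thesis using r p by blast
qed



lemma prod_main:
  assumes "generate G (A \<union> B) = carrier G"
  shows "length fs = length ds \<Longrightarrow> ds \<noteq> [] \<Longrightarrow> set ds \<subseteq> P \<Longrightarrow> set fs \<subseteq> carrier G - A \<Longrightarrow>
    \<exists>zs c. red zs \<and> c \<in> C \<and> mprod G (map2 (conjg G) ds fs) = mprod G zs \<otimes> c \<and> 1 \<le> V zs"
proof (induction ds arbitrary: fs)
  case Nil
  then show ?case by simp
next
  case (Cons d ds)
  obtain f fs' where fs: "fs = f # fs'" using Cons.prems(1) by (cases fs) auto
  have f: "f \<in> carrier G" "f \<notin> A" using Cons.prems fs by auto
  have d: "d \<in> P" using Cons.prems by auto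
  obtain ws where ws: "red ws" "V ws = 1" "inv f \<otimes> d \<otimes> f = mprod G ws"
    using conj_word[OF d f assms] by blast
  have cj: "conjg G d f = mprod G ws" unfolding conjg_def using ws by simp
  have wc: "mprod G ws \<in> carrier G" using ws mprod_car red_car' by blast
  show ?case
  proof (cases "ds = []")
    case True
    then have "fs' = []" using Cons.prems fs by simp
    then show ?thesis using True fs cj ws wc C_one by (intro exI[of _ ws] exI[of _ "\<one>"]) auto
  next
    case False
    have "length fs' = length ds" "set ds \<subseteq> P" "set fs' \<subseteq> carrier G - A"
      using Cons.prems fs by auto
    then obtain zs c where z: "red zs" "c \<in> C" "mprod G (map2 (conjg G) ds fs') = mprod G zs \<otimes> c"
      "1 \<le> V zs" using Cons.IH False by blast
    obtain zs' c' where z': "red zs'" "c' \<in> C" "mprod G ws \<otimes> \<one> \<otimes> mprod G zs = mprod G zs' \<otimes> c'"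
      "V ws + V zs - 1 \<le> V zs'" using K[OF ws(1) z(1) C_one] by blast
    have car: "mprod G zs \<in> carrier G" "mprod G zs' \<in> carrier G" "c \<in> carrier G" "c' \<in> carrier G"
      using z z' mprod_car red_car' C_car by auto
    have "mprod G (map2 (conjg G) (d # ds) fs) = mprod G ws \<otimes> (mprod G zs \<otimes> c)"
      using fs cj z(3) by simp
    also have "\<dots> = (mprod G ws \<otimes> \<one> \<otimes> mprod G zs) \<otimes> c" using wc car by (simp add: m_assoc)
    also have "\<dots> = mprod G zs' \<otimes> (c' \<otimes> c)" using z' car by (simp add: m_assoc)
    finally show ?thesis using z' z ws C_mult by (intro exI[of _ zs'] exI[of _ "c' \<otimes> c"]) auto
  qed
qed

end

theorem mainTheorem16:
  fixes G :: "('a, 'b) monoid_scheme" and A B C P :: "'a set"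
    and ds fs :: "'a list"
  assumes "amalgamated_free_product G A B C"
    and "normal_subsemigroup G P A"
    and "P \<inter> C = {}"
    and "length ds \<ge> 1" and "length fs = length ds"
    and "set ds \<subseteq> P"
    and "set fs \<subseteq> carrier G - A"
  shows "mprod G (map2 (conjg G) ds fs) \<notin> A"
proof -
  have afp: "group G" "subgroup A G" "subgroup B G" "A \<inter> B = C"
    "generate G (A \<union> B) = carrier G" "\<forall>ws. reduced_word A B C ws \<longrightarrow> mprod G ws \<noteq> \<one>\<^bsub>G\<^esub>"
    using assms(1) unfolding amalgamated_free_product_def by auto
  have ns: "P \<subseteq> A" "\<forall>x\<in>P. \<forall>y\<in>P. x \<otimes>\<^bsub>G\<^esub> y \<in> P" "\<forall>x\<in>P. \<forall>h\<in>A. inv\<^bsub>G\<^esub> h \<otimes>\<^bsub>G\<^esub> x \<otimes>\<^bsub>G\<^esub> h \<in> P"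
    using assms(2) unfolding normal_subsemigroup_def conjg_def by auto
  interpret amal G A B C P
    using afp ns assms(3) unfolding amal_def amal_axioms_def by blast
  have "ds \<noteq> []" using assms(4) by auto
  then obtain zs c where z: "red zs" "c \<in> C" "mprod G (map2 (conjg G) ds fs) = mprod G zs \<otimes>\<^bsub>G\<^esub> c" "1 \<le> V zs"
    using prod_main[OF afp(5) assms(5) _ assms(6,7)] by blast
  show ?thesis using notA[OF z(1) z(4) z(2)] z(3) by simp
qed


end
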